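(* Let $x$ be an infinite word over a finite alphabet and let $k,\lambda\in\mathbb{N}=\{1,2,3,\dots\}$ be such that $$\underline{d}(\mathrm{AP}(x,k,\lambda)) < \left(1+\left\lfloor\frac{k^2-k}{\lambda^2+\lambda}\right\rfloor\right)^{-1}.$$ Then there is a word $u$ with $|u|\le (k-1)\left\lfloor\frac{k^2-k}{\lambda^2+\lambda}\right\rfloor$ such that $u^\ell$ is a factor of $x$ for every $\ell>0$. In particular, $x$ is not $\omega$-power-free.
   Context: A factor is a contiguous subword; $|u|$ is the length of $u$ and $u^\ell$ is $\ell$ concatenated copies of $u$. A $(k,\lambda)$-anti-power is a word $w=w_1\cdots w_k$ with $|w_1|=\cdots=|w_k|$ such that $|\{i: w_i=w_j\}|\le\lambda$ for each $j\in\{1,\dots,k\}$. $\mathrm{AP}(x,k,\lambda)$ is the set of $m\in\mathbb{N}$ such that the prefix of $x$ of length $km$ is a $(k,\lambda)$-anti-power. The lower density of $S\subseteq\mathbb{N}$ is $\underline{d}(S)=\liminf_{n\to\infty}|S\cap\{1,\dots,n\}|/n$. A word is $\omega$-power-free if for every finite (nonempty) factor $u$ there exists $\ell\in\mathbb{N}$ such that $u^\ell$ is not a factor. *)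

theory Defs
  imports "HOL-Analysis.Analysis"
begin

text \<open>Infinite words are functions nat \<Rightarrow> 'a (positions 0,1,2,...); finite words are lists.\<close>

definition factor_of :: "'a list \<Rightarrow> (nat \<Rightarrow> 'a) \<Rightarrow> bool" where
  "factor_of u x \<longleftrightarrow> (\<exists>i. u = map x [i..<i + length u])"

definition word_pow :: "'a list \<Rightarrow> nat \<Rightarrow> 'a list" where
  "word_pow u l = concat (replicate l u)"

definition block :: "(nat \<Rightarrow> 'a) \<Rightarrow> nat \<Rightarrow> nat \<Rightarrow> 'a list" where
  "block x m i = map x [(i - 1) * m..<i * m]"

definition prefix_anti_power :: "(nat \<Rightarrow> 'a) \<Rightarrow> nat \<Rightarrow> nat \<Rightarrow> nat \<Rightarrow> bool" where
  "prefix_anti_power x k lam m \<longleftrightarrow>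
     (\<forall>j\<in>{1..k}. card {i\<in>{1..k}. block x m i = block x m j} \<le> lam)"

definition AP :: "(nat \<Rightarrow> 'a) \<Rightarrow> nat \<Rightarrow> nat \<Rightarrow> nat set" where
  "AP x k lam = {m. m \<ge> 1 \<and> prefix_anti_power x k lam m}"

definition lower_density :: "nat set \<Rightarrow> ereal" where
  "lower_density S = liminf (\<lambda>n. ereal (real (card (S \<inter> {1..n})) / real n))"

definition omega_power_free :: "(nat \<Rightarrow> 'a) \<Rightarrow> bool" where
  "omega_power_free x \<longleftrightarrow>
     (\<forall>u. u \<noteq> [] \<and> factor_of u x \<longrightarrow> (\<exists>l\<ge>1. \<not> factor_of (word_pow u l) x))"

end

theory Submission imports Defs begin

lemma word_pow_Suc: "word_pow u (Suc l) = u @ word_pow u l"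
  by (simp add: word_pow_def)

lemma length_word_pow: "length (word_pow u l) = l * length u"
  by (induction l) (auto simp: word_pow_Suc, simp add: word_pow_def)

lemma word_pow_add: "word_pow u (a + b) = word_pow u a @ word_pow u b"
  by (simp add: word_pow_def replicate_add)

lemma factor_prefix:
  assumes "factor_of (v @ w) x" shows "factor_of v x"
proof -
  obtain i where i: "v @ w = map x [i..<i + length (v @ w)]"
    using assms by (auto simp: factor_of_def)
  have "[i..<i + length (v @ w)] = [i..<i + length v] @ [i + length v..<i + length v + length w]"
    using upt_add_eq_append[of i "i+length v" "length w"] by (simp add: add.assoc)
  then have "v = map x [i..<i + length v]" using i by simp
  then show ?thesis by (auto simp: factor_of_def)
qed

lemma factor_pow_mono:
  assumes "factor_of (word_pow u a) x" "b \<le> a" shows "factor_of (word_pow u b) x"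
proof -
  have "word_pow u a = word_pow u b @ word_pow u (a - b)"
    using assms(2) word_pow_add[of u b "a - b"] by simp
  then show ?thesis using assms(1) factor_prefix by metis
qed

lemma periodic_pow:
  assumes per: "\<And>q. s \<le> q \<Longrightarrow> q < s + len \<Longrightarrow> x q = x (q + p)"
  shows "l * p \<le> len + p \<Longrightarrow> word_pow (map x [s..<s+p]) l = map x [s..<s + l * p]"
proof (induction l)
  case 0 then show ?case by (simp add: word_pow_def)
next
  case (Suc l)
  then have le: "l * p \<le> len" by simp
  have IH: "word_pow (map x [s..<s+p]) l = map x [s..<s + l * p]" using Suc by simp
  have sh: "map x [s+p..<s+p+l*p] = map x [s..<s + l * p]"
  proof (rule nth_equalityI)
    fix r assume "r < length (map x [s+p..<s+p+l*p])"
    then have r: "r < l * p" by simp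
    then show "map x [s+p..<s+p+l*p] ! r = map x [s..<s + l * p] ! r"
      using per[of "s + r"] le by (simp add: add.commute add.left_commute)
  qed simp
  have "[s..<s + Suc l * p] = [s..<s+p] @ [s+p..<s+p+l*p]"
    using upt_add_eq_append[of s "s+p" "l*p"] by (simp add: add.assoc)
  then show ?case using IH sh by (simp add: word_pow_Suc)
qed

lemma periodic_factor:
  assumes per: "\<And>q. s \<le> q \<Longrightarrow> q < s + len \<Longrightarrow> x q = x (q + p)"
    and "l * p \<le> len"
  shows "factor_of (word_pow (map x [s..<s+p]) l) x"
proof -
  have "word_pow (map x [s..<s+p]) l = map x [s..<s + l * p]"
    using periodic_pow[of s len x p, OF per] assms(2) by simp
  then show ?thesis unfolding factor_of_def
    by (intro exI[of _ s]) (simp add: length_word_pow)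
qed


lemma run_exists:
  assumes "lower_density S < ereal (1 / (1 + real N))"
  shows "\<exists>m\<ge>M. \<forall>t\<le>N. m + t \<notin> S"
proof (rule ccontr)
  assume "\<not> ?thesis"
  then have H: "\<forall>m\<ge>M. \<exists>t\<le>N. m+t \<in> S" by auto
  define M' where "M' = max M 1"
  have "\<forall>m. \<exists>t. m \<ge> M' \<longrightarrow> t \<le> N \<and> m+t \<in> S" using H M'_def by auto
  then obtain g where g: "\<And>m. m \<ge> M' \<Longrightarrow> g m \<le> N \<and> m + g m \<in> S" by metis
  have M'1: "M' \<ge> 1" by (simp add: M'_def)
  define h where "h j = M' + j*(N+1) + g (M' + j*(N+1))" for j
  have hlo: "M' + j*(N+1) \<le> h j" for j by (simp add: h_def)
  have hhi: "h j \<le> M' + j*(N+1) + N" for j using g[of "M' + j*(N+1)"] by (simp add: h_def)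
  have hS: "h j \<in> S" for j using g[of "M' + j*(N+1)"] by (simp add: h_def)
  have "strict_mono h"
  proof (rule strict_mono_Suc_iff[THEN iffD2], intro allI)
    fix j show "h j < h (Suc j)" using hhi[of j] hlo[of "Suc j"] by simp
  qed
  then have inj: "inj h" by (rule strict_mono_imp_inj_on)
  have card: "(n+1-M') div (N+1) \<le> card (S \<inter> {1..n})" if "n \<ge> M'" for n
  proof -
    define q where "q = (n+1-M') div (N+1)"
    have "q * (N+1) \<le> n+1-M'" unfolding q_def by (metis div_times_less_eq_dividend)
    have sub: "h ` {..<q} \<subseteq> S \<inter> {1..n}"
    proof
      fix z assume "z \<in> h ` {..<q}"
      then obtain j where j: "j < q" "z = h j" by auto
      have "Suc j * (N+1) \<le> q * (N+1)" using j(1) by (intro mult_le_mono1) simp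
      then have "j*(N+1) + N + 1 \<le> n + 1 - M'" using \<open>q * (N+1) \<le> n+1-M'\<close> by simp
      then show "z \<in> S \<inter> {1..n}" using j hS[of j] hlo[of j] hhi[of j] M'1 that by auto
    qed
    have "card (h ` {..<q}) = q" using inj by (simp add: card_image inj_on_subset)
    moreover have "card (h ` {..<q}) \<le> card (S \<inter> {1..n})" using sub by (intro card_mono) auto
    ultimately show ?thesis unfolding q_def by simp
  qed
  define c where "c = 1 / (1 + real N)"
  define K where "K = real (M'+N) / real (N+1)"
  have "ereal c \<le> lower_density S"
    unfolding lower_density_def le_Liminf_iff
  proof (intro allI impI)
    fix y assume y: "y < ereal c"
    have "(\<lambda>n. c - K * inverse (real n)) \<longlonglongrightarrow> c - K * 0"
      by (intro tendsto_intros lim_inverse_n)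
    then have "(\<lambda>n. ereal (c - K * inverse (real n))) \<longlonglongrightarrow> ereal c"
      by (simp add: tendsto_ereal)
    then have ev1: "eventually (\<lambda>n. y < ereal (c - K * inverse (real n))) sequentially"
      using y by (rule order_tendstoD)
    have ev2: "eventually (\<lambda>n. n \<ge> M') sequentially" by (rule eventually_ge_at_top)
    show "eventually (\<lambda>n. y < ereal (real (card (S \<inter> {1..n})) / real n)) sequentially"
      using ev1 ev2
    proof eventually_elim
      case (elim n)
      define q where "q = (n+1-M') div (N+1)"
      have qc: "q \<le> card (S \<inter> {1..n})" using card elim(2) q_def by simp
      have "q * (N+1) + (n+1-M') mod (N+1) = n+1-M'" unfolding q_def by (metis div_mult_mod_eq)
      moreover have "(n+1-M') mod (N+1) \<le> N" by (metis Suc_eq_plus1 less_Suc_eq_le mod_less_divisor zero_less_Suc)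
      ultimately have "n + 1 \<le> q * (N+1) + N + M'" by linarith
      then have "real n + 1 \<le> real q * (N+1) + N + M'" by (metis of_nat_add of_nat_le_iff of_nat_mult of_nat_1)
      moreover have "real q \<le> real (card (S \<inter> {1..n}))" using qc by simp
      ultimately have A: "real n \<le> real (card (S \<inter> {1..n})) * (N+1) + N + M'"
        by (smt (verit) mult_right_mono of_nat_0_le_iff)
      have npos: "real n > 0" using elim(2) M'1 by simp
      have "c - K * inverse (real n) = (real n - (M'+N)) / ((N+1) * real n)"
        unfolding c_def K_def using npos by (simp add: divide_simps)
      also have "\<dots> = ((real n - (M'+N)) / (N+1)) / real n" by simp
      also have "\<dots> \<le> real (card (S \<inter> {1..n})) / real n"
      proof (rule divide_right_mono)
        show "(real n - (M'+N)) / (N+1) \<le> real (card (S \<inter> {1..n}))"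
          using A by (simp add: pos_divide_le_eq algebra_simps)
      qed simp
      finally show ?case using elim(1) by (meson ereal_less_eq(3) less_le_trans)
    qed
  qed
  then show False using assms c_def by simp
qed


lemma block_shift:
  assumes eq: "block x m (Suc i) = block x m (Suc i + e)"
    and a: "i*m \<le> a" "a < Suc i * m"
  shows "x a = x (a + e*m)"
proof -
  define r where "r = a - i*m"
  have r: "r < m" "a = i*m + r" using a by (auto simp: r_def)
  have "block x m (Suc i) ! r = x (i*m + r)" unfolding block_def using r by simp
  moreover have "block x m (Suc i + e) ! r = x ((i+e)*m + r)" unfolding block_def using r
    by (simp add: algebra_simps)
  ultimately show ?thesis using eq r by (simp add: algebra_simps)
qed

lemma two_blocks:
  assumes e0: "block x m0 (Suc i) = block x m0 (Suc i + e)"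
    and e1: "block x (m0 + t) (Suc i) = block x (m0 + t) (Suc i + e)"
    and q: "i*(m0+t) + e*m0 \<le> q" "q < Suc i * m0 + e*m0"
  shows "x q = x (q + e*t)"
proof -
  define a where "a = q - e*m0"
  have a: "q = a + e*m0" "i*(m0+t) \<le> a" "a < Suc i * m0" using q by (auto simp: a_def)
  have "i*m0 \<le> i*(m0+t)" by simp
  then have "x a = x (a + e*m0)" using block_shift[OF e0, of a] a by linarith
  moreover have "x a = x (a + e*(m0+t))" using block_shift[OF e1, of a] a
    by (simp add: algebra_simps)
  ultimately show ?thesis using a(1) by (simp add: algebra_simps)
qed


lemma two_choose2: "2 * (n choose 2) = n * (n - 1)"
proof -
  have "even (n * (n - 1))" by (cases "even n") auto
  then show ?thesis by (simp add: choose_two)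
qed

definition pairs :: "(nat \<Rightarrow> 'a) \<Rightarrow> nat \<Rightarrow> nat \<Rightarrow> nat set set" where
  "pairs x k m = {B. B \<subseteq> {1..k} \<and> card B = 2 \<and> (\<forall>a\<in>B. \<forall>b\<in>B. block x m a = block x m b)}"

lemma pairs_sub: "pairs x k m \<subseteq> {B. B \<subseteq> {1..k} \<and> card B = 2}"
  by (auto simp: pairs_def)

lemma finite_pairs: "finite (pairs x k m)"
  by (rule finite_subset[of _ "Pow {1..k}"]) (auto simp: pairs_def)

lemma pairs_card:
  assumes "\<not> prefix_anti_power x k lam m"
  shows "Suc lam choose 2 \<le> card (pairs x k m)"
proof -
  obtain j0 where j0: "j0 \<in> {1..k}" and c: "card {i\<in>{1..k}. block x m i = block x m j0} > lam"
    using assms unfolding prefix_anti_power_def by (auto simp: not_le)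
  define C where "C = {i\<in>{1..k}. block x m i = block x m j0}"
  have fC: "finite C" by (simp add: C_def)
  have sub: "{B. B \<subseteq> C \<and> card B = 2} \<subseteq> pairs x k m"
    unfolding pairs_def C_def by (auto simp: subset_iff)
  have "card {B. B \<subseteq> C \<and> card B = 2} = card C choose 2" using fC by (rule n_subsets)
  moreover have "Suc lam choose 2 \<le> card C choose 2"
  proof -
    have "Suc lam \<le> card C" using c C_def by simp
    then have "Suc lam * (Suc lam - 1) \<le> card C * (card C - 1)" by (intro mult_le_mono) auto
    then show ?thesis using two_choose2[of "Suc lam"] two_choose2[of "card C"] by linarith
  qed
  moreover have "card {B. B \<subseteq> C \<and> card B = 2} \<le> card (pairs x k m)"
    using sub finite_pairs by (rule card_mono[rotated])
  ultimately show ?thesis by linarith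
qed

lemma arith_key:
  fixes k lam :: nat
  assumes "lam \<ge> 1"
  shows "k choose 2 < ((k^2 - k) div (lam^2 + lam) + 1) * (Suc lam choose 2)"
proof -
  define D where "D = lam^2 + lam"
  have D0: "D > 0" using assms by (simp add: D_def)
  have "k^2 - k = (k^2 - k) div D * D + (k^2 - k) mod D" by simp
  moreover have "(k^2 - k) mod D < D" using D0 by simp
  ultimately have "k^2 - k < ((k^2 - k) div D + 1) * D" by (metis add_mult_distrib mult_1 add_less_cancel_left)
  moreover have "2 * (k choose 2) = k^2 - k" using two_choose2[of k]
    by (simp add: power2_eq_square algebra_simps)
  moreover have "2 * (Suc lam choose 2) = D" using two_choose2[of "Suc lam"]
    by (simp add: D_def power2_eq_square algebra_simps)
  ultimately have "2 * (k choose 2) < 2 * (((k^2 - k) div D + 1) * (Suc lam choose 2))"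
    by (metis mult.left_commute)
  then show ?thesis unfolding D_def by simp
qed

lemma pigeon:
  fixes k lam N :: nat
  assumes "\<And>s. s \<le> N \<Longrightarrow> Suc lam choose 2 \<le> card (P s)"
    and "\<And>s. s \<le> N \<Longrightarrow> P s \<subseteq> U" and "finite U"
    and "card U < (N + 1) * (Suc lam choose 2)"
  shows "\<exists>s t. s < t \<and> t \<le> N \<and> P s \<inter> P t \<noteq> {}"
proof (rule ccontr)
  assume "\<not> ?thesis"
  then have disj: "\<forall>s\<in>{..N}. \<forall>t\<in>{..N}. s \<noteq> t \<longrightarrow> P s \<inter> P t = {}"
    by (metis Int_commute atMost_iff nat_neq_iff)
  have fin: "\<forall>s\<in>{..N}. finite (P s)" using assms(2,3) finite_subset by blast
  have "card (\<Union>(P ` {..N})) = (\<Sum>s\<in>{..N}. card (P s))"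
    by (rule card_UN_disjoint[OF _ fin disj]) simp
  moreover have "(\<Sum>s\<in>{..N}. card (P s)) \<ge> (\<Sum>s\<in>{..N}. Suc lam choose 2)"
    using assms(1) by (intro sum_mono) auto
  moreover have "card (\<Union>(P ` {..N})) \<le> card U" using assms(2,3) by (intro card_mono) auto
  ultimately show False using assms(4) by simp
qed

theorem corollary3p6:
  fixes x :: "nat \<Rightarrow> 'a" and k lam :: nat
  assumes "finite (range x)"
    and "k \<ge> 1" and "lam \<ge> 1"
    and "lower_density (AP x k lam)
           < ereal (1 / (1 + real ((k^2 - k) div (lam^2 + lam))))"
  shows "(\<exists>u. u \<noteq> [] \<and> length u \<le> (k - 1) * ((k^2 - k) div (lam^2 + lam))
              \<and> (\<forall>l>0. factor_of (word_pow u l) x))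
         \<and> \<not> omega_power_free x"
proof -
  define N where "N = (k^2 - k) div (lam^2 + lam)"
  define L where "L = (k - 1) * N"
  have key: "\<exists>u. u \<noteq> [] \<and> length u \<le> L \<and> set u \<subseteq> range x \<and> factor_of (word_pow u l) x"
    if l0: "l > 0" for l
  proof -
    define M where "M = l*L + L + 1"
    obtain m where mM: "m \<ge> M" and mS: "\<forall>t\<le>N. m + t \<notin> AP x k lam"
      using run_exists[of "AP x k lam" N M] assms(4) unfolding N_def by blast
    have nap: "\<not> prefix_anti_power x k lam (m + t)" if "t \<le> N" for t
      using mS that mM unfolding AP_def M_def by auto
    define P where "P t = pairs x k (m + t)" for t
    have "\<exists>s t. s < t \<and> t \<le> N \<and> P s \<inter> P t \<noteq> {}"
    proof (rule pigeon[of N lam P "{B. B \<subseteq> {1..k} \<and> card B = 2}"])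
      show "Suc lam choose 2 \<le> card (P s)" if "s \<le> N" for s
        unfolding P_def using pairs_card[OF nap[OF that]] .
      show "P s \<subseteq> {B. B \<subseteq> {1..k} \<and> card B = 2}" for s
        unfolding P_def by (rule pairs_sub)
      show "finite {B. B \<subseteq> {1..k} \<and> card B = 2}" by simp
      show "card {B. B \<subseteq> {1..k} \<and> card B = 2} < (N + 1) * (Suc lam choose 2)"
        using n_subsets[of "{1..k}" 2] arith_key[OF assms(3), of k] unfolding N_def by simp
    qed
    then obtain s t B where st: "s < t" "t \<le> N" and B: "B \<in> P s" "B \<in> P t" by blast
    from B(1) have B2: "card B = 2" and Bk: "B \<subseteq> {1..k}" by (auto simp: P_def pairs_def)
    then obtain a b where ab: "B = {a, b}" "a < b" 
      by (metis card_2_iff insert_commute nat_neq_iff)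
    have a1: "a \<ge> 1" and bk: "b \<le> k" using Bk ab by auto
    obtain i where i: "a = Suc i" using a1 by (cases a) auto
    define e where "e = b - Suc i"
    have e: "b = Suc i + e" "e \<ge> 1" using ab i unfolding e_def by auto
    define m0 where "m0 = m + s"
    define t' where "t' = t - s"
    have mt: "m + t = m0 + t'" "t' \<ge> 1" "t' \<le> N" using st by (auto simp: m0_def t'_def)
    have abB: "a \<in> B" "b \<in> B" using ab(1) by auto
    have "block x (m + s) a = block x (m + s) b"
      using B(1) abB unfolding P_def pairs_def by blast
    then have e0: "block x m0 (Suc i) = block x m0 (Suc i + e)"
      unfolding m0_def using i e(1) by simp
    have "block x (m + t) a = block x (m + t) b"
      using B(2) abB unfolding P_def pairs_def by blast
    then have e1: "block x (m0 + t') (Suc i) = block x (m0 + t') (Suc i + e)"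
      unfolding mt(1) using i e(1) by simp
    define p where "p = e * t'"
    define s0 where "s0 = i*(m0+t') + e*m0"
    have ik: "i \<le> k - 1" "e \<le> k - 1" using bk e by auto
    have it: "i * t' \<le> L" unfolding L_def using ik mt by (intro mult_le_mono) auto
    have pL: "p \<le> L" unfolding L_def p_def using ik mt by (intro mult_le_mono) auto
    have p1: "p \<ge> 1" unfolding p_def using e mt by simp
    define len where "len = m0 - i * t'"
    have s0len: "s0 + len = Suc i * m0 + e*m0"
      unfolding s0_def len_def using it mM M_def m0_def by (simp add: algebra_simps)
    have per: "x q = x (q + p)" if "s0 \<le> q" "q < s0 + len" for q
      using two_blocks[OF e0 e1, of q] that s0len unfolding s0_def p_def by simp
    have "l * p \<le> l * L" using pL by (rule mult_le_mono2)
    moreover have "l * L \<le> len" using it mM unfolding len_def M_def m0_def by simp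
    ultimately have lp: "l * p \<le> len" by (rule le_trans)
    show ?thesis
    proof (intro exI conjI)
      show "map x [s0..<s0+p] \<noteq> []" using p1 by simp
      show "length (map x [s0..<s0+p]) \<le> L" using pL by simp
      show "set (map x [s0..<s0+p]) \<subseteq> range x" by auto
      show "factor_of (word_pow (map x [s0..<s0+p]) l) x"
        by (rule periodic_factor[of s0 len x p, OF per lp])
    qed
  qed
  define U where "U = {u. set u \<subseteq> range x \<and> length u \<le> L}"
  have fU: "finite U" unfolding U_def using finite_lists_length_le[OF assms(1)] by simp
  have "\<exists>u. u \<noteq> [] \<and> length u \<le> L \<and> (\<forall>l>0. factor_of (word_pow u l) x)"
  proof (rule ccontr)
    assume H: "\<not> ?thesis"
    have "\<forall>u\<in>U. \<exists>l. (u \<noteq> [] \<longrightarrow> l > 0 \<and> \<not> factor_of (word_pow u l) x)"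
      using H unfolding U_def by auto
    then obtain f where f: "\<And>u. u \<in> U \<Longrightarrow> u \<noteq> [] \<Longrightarrow> \<not> factor_of (word_pow u (f u)) x"
      by metis
    define l where "l = Suc (\<Sum>u\<in>U. f u)"
    obtain u where u: "u \<noteq> []" "length u \<le> L" "set u \<subseteq> range x" "factor_of (word_pow u l) x"
      using key[of l] l_def by auto
    have uU: "u \<in> U" using u unfolding U_def by auto
    have "f u \<le> (\<Sum>u\<in>U. f u)" using fU uU by (intro member_le_sum) auto
    then have "f u \<le> l" by (simp add: l_def)
    then have "factor_of (word_pow u (f u)) x" using factor_pow_mono u(4) by blast
    then show False using f uU u(1) by blast
  qed
  then obtain u where u: "u \<noteq> []" "length u \<le> L" "\<forall>l>0. factor_of (word_pow u l) x" by blast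
  have "\<not> omega_power_free x"
  proof
    assume "omega_power_free x"
    moreover have "factor_of u x" using u(3)[rule_format, of 1] by (simp add: word_pow_def)
    ultimately obtain l where "l \<ge> 1" "\<not> factor_of (word_pow u l) x"
      using u(1) unfolding omega_power_free_def by blast
    then show False using u(3) by simp
  qed
  then show ?thesis using u unfolding L_def N_def by blast
qed

end
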